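(* Let $x_1<x_2$, $\eta\in\mathbb{R}$, $\rho_{0,2}\in L^1(\mathbb{R})$, and $y_2>x_1$. Define \[ \rho_0(x)=\begin{cases}\eta\,\mathbb{1}_{(x_1,x_2)}(x) & \text{if } x\geq x_1,\\ \rho_{0,2}(x) & \text{if } x<x_1,\end{cases} \qquad \rho_T(x)=\begin{cases}\dfrac{\eta(x_2-x_1)}{y_2-x_1}\mathbb{1}_{(x_1,y_2)}(x) & \text{if } x\geq x_1,\\ \rho_{0,2}(x) & \text{if } x<x_1.\end{cases} \] Then, for $T>0$, there exist real numbers $w,a,b$ such that the solution $\rho$ of \[ \partial_t\rho+w\,\partial_x\big(\sigma(ax+b)\rho\big)=0\quad (x,t)\in\mathbb{R}\times(0,T),\qquad \rho(0)=\rho_0, \] satisfies $\rho(T)=\rho_T$.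
   Context: $\sigma(z)=\max(z,0)$ is the ReLU function. Solutions of the (linear) continuity equation are understood in the distributional sense; the equation is well-posed since the velocity field is Lipschitz. *)

theory Defs
  imports "HOL-Analysis.Analysis"
begin

definition relu :: "real \<Rightarrow> real" where
  "relu z = max z 0"

definition test_function :: "(real \<Rightarrow> real) \<Rightarrow> bool" where
  "test_function phi \<longleftrightarrow>
     (\<forall>x. phi differentiable (at x)) \<and> continuous_on UNIV (deriv phi) \<and>
     (\<exists>R. \<forall>x. \<bar>x\<bar> > R \<longrightarrow> phi x = 0)"

definition weak_solution ::
  "real \<Rightarrow> (real \<Rightarrow> real) \<Rightarrow> (real \<Rightarrow> real) \<Rightarrow> (real \<Rightarrow> real \<Rightarrow> real) \<Rightarrow> bool" where
  "weak_solution T v rho0 rho \<longleftrightarrow>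
     (\<forall>t\<in>{0..T}. integrable lborel (rho t)) \<and>
     (\<lambda>p. rho (fst p) (snd p)) \<in> borel_measurable (lborel \<Otimes>\<^sub>M lborel) \<and>
     set_integrable (lborel \<Otimes>\<^sub>M lborel) ({0..T} \<times> UNIV) (\<lambda>p. rho (fst p) (snd p)) \<and>
     (AE x in lborel. rho 0 x = rho0 x) \<and>
     (\<forall>phi. test_function phi \<longrightarrow>
        continuous_on {0..T} (\<lambda>t. \<integral>x. rho t x * phi x \<partial>lborel) \<and>
        (\<forall>t\<in>{0..T}. (\<integral>x. rho t x * phi x \<partial>lborel) - (\<integral>x. rho0 x * phi x \<partial>lborel)
            = (LBINT s=0..t. (\<integral>x. v x * rho s x * deriv phi x \<partial>lborel))))"

end

theory Submission imports Defs begin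

lemma tf_deriv:
  assumes "test_function phi"
  shows "(phi has_real_derivative deriv phi x) (at x)"
  using assms unfolding test_function_def by (simp add: DERIV_deriv_iff_real_differentiable)

lemma tf_cont: assumes "test_function phi" shows "continuous_on UNIV phi"
  using tf_deriv[OF assms] by (meson DERIV_isCont continuous_at_imp_continuous_on)

lemma tf_dcont: assumes "test_function phi" shows "continuous_on UNIV (deriv phi)"
  using assms unfolding test_function_def by simp

lemma tf_bounded: assumes "test_function phi" shows "\<exists>B. \<forall>x. \<bar>phi x\<bar> \<le> B"
proof -
  obtain R where R: "\<And>x. \<bar>x\<bar> > R \<Longrightarrow> phi x = 0" using assms unfolding test_function_def by blast
  have "compact (phi ` cball 0 \<bar>R\<bar>)"
    by (rule compact_continuous_image) (use tf_cont[OF assms] continuous_on_subset in auto)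
  then obtain B where B: "\<And>y. y \<in> phi ` cball 0 \<bar>R\<bar> \<Longrightarrow> norm y \<le> B"
    using compact_imp_bounded bounded_iff by metis
  have "\<bar>phi x\<bar> \<le> max B 0" for x
  proof (cases "\<bar>x\<bar> > R")
    case True then show ?thesis using R by simp
  next
    case False then have "x \<in> cball 0 \<bar>R\<bar>" by auto
    then show ?thesis using B[of "phi x"] by auto
  qed
  then show ?thesis by blast
qed

lemma Phi_deriv:
  fixes f :: "real \<Rightarrow> real" and c y :: real
  assumes "continuous_on UNIV f"
  shows "((\<lambda>u. LBINT x=c..u. f x) has_real_derivative f y) (at y)"
proof -
  have "((\<lambda>u. LBINT x=c..u. f x) has_vector_derivative f y) (at y within {min c y - 1..max c y + 1})"
    by (rule interval_integral_FTC2) (auto intro: continuous_on_subset[OF assms])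
  moreover have "at y within {min c y - 1..max c y + 1} = at y"
    by (rule at_within_Icc_at) auto
  ultimately show ?thesis by (simp add: has_real_derivative_iff_has_vector_derivative)
qed

lemma ibp:
  fixes c y :: real
  assumes "test_function phi" "c \<le> y"
  shows "(LBINT x=c..y. (x - c) * deriv phi x) = (y - c) * phi y - (LBINT x=c..y. phi x)"
proof -
  have cphi: "continuous_on {c..y} phi" using tf_cont[OF assms(1)] continuous_on_subset by blast
  have cdphi: "continuous_on {c..y} (deriv phi)" using tf_dcont[OF assms(1)] continuous_on_subset by blast
  have "(LBINT x=c..y. phi x + (x - c) * deriv phi x) = (y - c) * phi y - (c - c) * phi c"
  proof (rule interval_integral_FTC_finite)
    show "continuous_on {min c y..max c y} (\<lambda>x. phi x + (x - c) * deriv phi x)"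
      using assms cphi cdphi by (auto intro!: continuous_intros)
    fix x
    have "((\<lambda>x. (x - c) * phi x) has_real_derivative (1 * phi x + (x - c) * deriv phi x)) (at x)"
      using tf_deriv[OF assms(1)] by (auto intro!: derivative_eq_intros)
    then show "((\<lambda>x. (x - c) * phi x) has_vector_derivative phi x + (x - c) * deriv phi x) (at x within {min c y..max c y})"
      by (simp add: has_real_derivative_iff_has_vector_derivative has_vector_derivative_at_within)
  qed
  moreover have "(LBINT x=c..y. phi x + (x - c) * deriv phi x) = (LBINT x=c..y. phi x) + (LBINT x=c..y. (x - c) * deriv phi x)"
    by (rule interval_lebesgue_integral_add(2)) (use assms cphi cdphi in \<open>auto intro!: interval_integrable_continuous_on continuous_intros\<close>)
  ultimately show ?thesis by simp
qed


lemma prod_int: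
  fixes g h :: "real \<Rightarrow> real"
  assumes g: "integrable lborel g" and h: "integrable lborel h"
  shows "integrable (lborel \<Otimes>\<^sub>M lborel) (\<lambda>p. g (fst p) * h (snd p))"
proof (rule lborel_pair.Fubini_integrable)
  have [measurable]: "g \<in> borel_measurable lborel" "h \<in> borel_measurable lborel"
    using g h by auto
  show "(\<lambda>p. g (fst p) * h (snd p)) \<in> borel_measurable (lborel \<Otimes>\<^sub>M lborel)" by measurable
  show "integrable lborel (\<lambda>x. LINT y|lborel. norm (g (fst (x, y)) * h (snd (x, y))))"
    using g by (simp add: abs_mult)
  show "AE x in lborel. integrable lborel (\<lambda>y. g (fst (x, y)) * h (snd (x, y)))"
    using h by simp
qed

lemma meas_test:
  fixes x1 L w :: real
  shows "(\<lambda>p. indicator {x1<..<x1 + L * exp (w * fst p)} (snd p) :: real) \<in> borel_measurable (lborel \<Otimes>\<^sub>M lborel)"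
proof -
  have "(\<lambda>p. indicator {x1<..<x1 + L * exp (w * fst p)} (snd p) :: real) = (\<lambda>p. if x1 < snd p \<and> snd p < x1 + L * exp (w * fst p) then 1 else 0)"
    by (auto simp: indicator_def fun_eq_iff)
  also have "\<dots> \<in> borel_measurable (lborel \<Otimes>\<^sub>M lborel)" by measurable
  finally show ?thesis .
qed

lemma time_FTC:
  fixes x1 L w t :: real
  assumes tf: "test_function phi" and L: "L > 0"
  defines "X \<equiv> \<lambda>t. x1 + L * exp (w * t)"
  defines "Phi \<equiv> \<lambda>y::real. LBINT x=x1..y. phi x"
  shows "exp (-(w * t)) * Phi (X t) - exp (-(w * 0)) * Phi (X 0) =
    (LBINT s=0..t. w * exp (-(w * s)) * (LBINT x=x1..X s. (x - x1) * deriv phi x))"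
proof -
  have PhiD: "(Phi has_real_derivative phi y) (at y)" for y
    unfolding Phi_def by (rule Phi_deriv[OF tf_cont[OF tf]])
  have Phic: "continuous_on UNIV Phi"
    using PhiD by (meson DERIV_isCont continuous_at_imp_continuous_on)
  have phic: "continuous_on UNIV phi" by (rule tf_cont[OF tf])
  have eq: "w * exp (-(w * s)) * (LBINT x=x1..X s. (x - x1) * deriv phi x)
     = w * L * phi (X s) - w * exp (-(w * s)) * Phi (X s)" for s
  proof -
    have "X s \<ge> x1" unfolding X_def using L by (simp add: less_imp_le)
    then have "(LBINT x=x1..X s. (x - x1) * deriv phi x) = (X s - x1) * phi (X s) - Phi (X s)"
      unfolding Phi_def by (rule ibp[OF tf])
    moreover have "exp (-(w * s)) * (X s - x1) = L" unfolding X_def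
      by (simp add: exp_minus field_simps)
    moreover have "w * exp (-(w * s)) * ((X s - x1) * phi (X s) - Phi (X s)) =
       w * (exp (-(w * s)) * (X s - x1)) * phi (X s) - w * exp (-(w * s)) * Phi (X s)"
      by (simp add: algebra_simps)
    ultimately show ?thesis by simp
  qed
  have "(LBINT s=0..t. w * L * phi (X s) - w * exp (-(w * s)) * Phi (X s)) =
     exp (-(w * t)) * Phi (X t) - exp (-(w * 0)) * Phi (X 0)"
  unfolding zero_ereal_def
  proof (rule interval_integral_FTC_finite[where F="\<lambda>s. exp (-(w * s)) * Phi (X s)"])
    show "continuous_on {min 0 t..max 0 t} (\<lambda>s. w * L * phi (X s) - w * exp (-(w * s)) * Phi (X s))"
    proof -
      have cX: "continuous_on UNIV X" unfolding X_def by (intro continuous_intros)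
      have "continuous_on UNIV (\<lambda>s. phi (X s))" by (rule continuous_on_compose2[OF phic cX]) auto
      moreover have "continuous_on UNIV (\<lambda>s. Phi (X s))" by (rule continuous_on_compose2[OF Phic cX]) auto
      ultimately have "continuous_on UNIV (\<lambda>s. w * L * phi (X s) - w * exp (-(w * s)) * Phi (X s))"
        by (intro continuous_intros)
      then show ?thesis by (rule continuous_on_subset) auto
    qed
    fix s
    have dX: "(X has_real_derivative L * (exp (w * s) * (w * 1))) (at s)"
      unfolding X_def by (auto intro!: derivative_eq_intros)
    have dPX: "((\<lambda>s. Phi (X s)) has_real_derivative phi (X s) * (L * (exp (w * s) * (w * 1)))) (at s)"
      by (rule DERIV_chain2[OF PhiD dX])
    have dE: "((\<lambda>s. exp (-(w * s))) has_real_derivative exp (-(w * s)) * (- (w * 1))) (at s)"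
      by (auto intro!: derivative_eq_intros)
    have "((\<lambda>s. exp (-(w * s)) * Phi (X s)) has_real_derivative
       exp (-(w * s)) * (phi (X s) * (L * (exp (w * s) * (w * 1)))) + (exp (-(w * s)) * (- (w * 1))) * Phi (X s))
       (at s)"
      by (rule DERIV_mult'[OF dE dPX])
    moreover have "exp (-(w * s)) * (phi (X s) * (L * (exp (w * s) * (w * 1)))) + (exp (-(w * s)) * (- (w * 1))) * Phi (X s)
       = w * L * phi (X s) - w * exp (-(w * s)) * Phi (X s)"
      by (simp add: exp_minus field_simps)
    ultimately have "((\<lambda>s. exp (-(w * s)) * Phi (X s)) has_real_derivative
       w * L * phi (X s) - w * exp (-(w * s)) * Phi (X s)) (at s)" by metis
    then show "((\<lambda>s. exp (-(w * s)) * Phi (X s)) has_vector_derivative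
       w * L * phi (X s) - w * exp (-(w * s)) * Phi (X s)) (at s within {min 0 t..max 0 t})"
      unfolding has_real_derivative_iff_has_vector_derivative by (rule has_vector_derivative_at_within)
  qed
  then show ?thesis by (simp only: eq)
qed


lemma LBINT_as_set:
  fixes a b :: real and f :: "real \<Rightarrow> real"
  assumes "a \<le> b"
  shows "(LBINT x=a..b. f x) = (\<integral>x. indicator {a<..<b} x *\<^sub>R f x \<partial>lborel)"
  using assms by (simp add: interval_lebesgue_integral_def set_lebesgue_integral_def)

lemma set_int_cont:
  fixes a b :: real and f :: "real \<Rightarrow> real"
  assumes "continuous_on UNIV f"
  shows "integrable lborel (\<lambda>x. indicator {a<..<b} x *\<^sub>R f x)"
proof -
  have "set_integrable lborel {a..b} f"
    by (rule borel_integrable_atLeastAtMost') (rule continuous_on_subset[OF assms], auto)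
  then have "set_integrable lborel {a<..<b} f"
    by (rule set_integrable_subset) auto
  then show ?thesis by (simp add: set_integrable_def)
qed

lemma int_ind_const:
  fixes a b c :: real
  shows "integrable lborel (\<lambda>x. c * indicator {a<..<b} x)"
proof (cases "a \<le> b")
  case True
  then have "integrable lborel (indicator {a<..<b} :: real \<Rightarrow> real)"
    by (intro integrable_real_indicator) auto
  then show ?thesis by simp
next
  case False
  then have "{a<..<b} = {}" by auto
  then show ?thesis by simp
qed

lemma int_rho02_phi:
  fixes rho02 phi :: "real \<Rightarrow> real"
  assumes "integrable lborel rho02" "test_function phi"
  shows "integrable lborel (\<lambda>x. indicator {..<x1} x *\<^sub>R (rho02 x * phi x))"
proof -
  obtain B where B: "\<And>x. \<bar>phi x\<bar> \<le> B" using tf_bounded[OF assms(2)] by blast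
  have [measurable]: "rho02 \<in> borel_measurable lborel" using assms(1) by auto
  have [measurable]: "phi \<in> borel_measurable lborel"
    using tf_cont[OF assms(2)] by (simp add: borel_measurable_continuous_onI)
  have "integrable lborel (\<lambda>x. rho02 x * phi x)"
  proof (rule Bochner_Integration.integrable_bound[of lborel "\<lambda>x. B * rho02 x"])
    show "integrable lborel (\<lambda>x. B * rho02 x)" using assms(1) by simp
    show "(\<lambda>x. rho02 x * phi x) \<in> borel_measurable lborel" by measurable
    show "AE x in lborel. norm (rho02 x * phi x) \<le> norm (B * rho02 x)"
    proof (rule AE_I2)
      fix x
      have "\<bar>rho02 x\<bar> * \<bar>phi x\<bar> \<le> \<bar>rho02 x\<bar> * B" using B[of x] by (simp add: mult_left_mono)
      moreover have "B \<ge> 0" using B[of x] by simp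
      ultimately show "norm (rho02 x * phi x) \<le> norm (B * rho02 x)"
        by (simp add: abs_mult mult.commute)
    qed
  qed
  then show ?thesis by (rule integrable_mult_indicator[rotated]) simp
qed


theorem lemma1:
  fixes x1 x2 eta y2 T :: real and rho02 :: "real \<Rightarrow> real"
  assumes "x1 < x2" and "integrable lborel rho02" and "y2 > x1" and "T > 0"
  shows "\<exists>w a b. \<exists>rho. weak_solution T (\<lambda>x. w * relu (a * x + b))
            (\<lambda>x. if x \<ge> x1 then eta * indicator {x1<..<x2} x else rho02 x) rho \<and>
          (AE x in lborel. rho T x =
            (if x \<ge> x1 then eta * (x2 - x1) / (y2 - x1) * indicator {x1<..<y2} x else rho02 x))"
proof -
  define L where "L = x2 - x1"
  have L: "L > 0" using assms(1) unfolding L_def by simp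
  define w where "w = ln ((y2 - x1) / L) / T"
  have ewT: "exp (w * T) = (y2 - x1) / L"
    unfolding w_def using assms(3,4) L by simp
  define X where "X = (\<lambda>t::real. x1 + L * exp (w * t))"
  define rho where "rho = (\<lambda>t x. indicator {..<x1} x * rho02 x + eta * exp (-(w * t)) * indicator {x1<..<X t} x :: real)"
  define rho0 where "rho0 = (\<lambda>x. if x \<ge> x1 then eta * indicator {x1<..<x2} x else rho02 x)"
  define v where "v = (\<lambda>x. w * relu (1 * x + - x1))"
  have X0: "X 0 = x2" unfolding X_def L_def by simp
  have XT: "X T = y2" unfolding X_def using ewT L by simp
  have Xge: "X t > x1" for t unfolding X_def using L by simp
  have rho0_eq: "rho 0 x = rho0 x" for x
    unfolding rho_def rho0_def X0 by (auto simp: indicator_def)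
  have rhoT: "rho T x = (if x \<ge> x1 then eta * (x2 - x1) / (y2 - x1) * indicator {x1<..<y2} x else rho02 x)" for x
  proof -
    have "exp (-(w * T)) = L / (y2 - x1)" by (simp add: exp_minus ewT)
    then show ?thesis unfolding rho_def XT L_def by (auto simp: indicator_def)
  qed
  have meas02[measurable]: "rho02 \<in> borel_measurable lborel" using assms(2) by auto
  have int_rho: "integrable lborel (rho t)" for t
  proof -
    have "integrable lborel (\<lambda>x. indicator {..<x1} x *\<^sub>R rho02 x)"
      by (rule integrable_mult_indicator) (use assms(2) in auto)
    moreover have "integrable lborel (\<lambda>x. (eta * exp (-(w * t))) * indicator {x1<..<X t} x)"
      by (rule int_ind_const)
    ultimately show ?thesis unfolding rho_def by simp
  qed
  have meas: "(\<lambda>p. rho (fst p) (snd p)) \<in> borel_measurable (lborel \<Otimes>\<^sub>M lborel)"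
    unfolding rho_def X_def
    by (intro borel_measurable_add borel_measurable_times meas_test) measurable
  have sint: "set_integrable (lborel \<Otimes>\<^sub>M lborel) ({0..T} \<times> UNIV) (\<lambda>p. rho (fst p) (snd p))"
  proof -
    define E where "E = exp (\<bar>w\<bar> * T)"
    have intT: "integrable lborel (indicator {0..T} :: real \<Rightarrow> real)"
      using assms(4) by (intro integrable_real_indicator) auto
    have p1: "integrable (lborel \<Otimes>\<^sub>M lborel)
        (\<lambda>p. indicator {0..T} (fst p) * (indicator {..<x1} (snd p) * rho02 (snd p)) :: real)"
    proof (rule prod_int[OF intT])
      show "integrable lborel (\<lambda>x. indicator {..<x1} x * rho02 x :: real)"
        using integrable_mult_indicator[of "{..<x1}" lborel rho02] assms(2) by simp
    qed
    have p2: "integrable (lborel \<Otimes>\<^sub>M lborel)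
        (\<lambda>p. indicator {0..T} (fst p) * exp (-(w * fst p)) * indicator {x1<..<X (fst p)} (snd p) :: real)"
    proof (rule Bochner_Integration.integrable_bound)
      show "integrable (lborel \<Otimes>\<^sub>M lborel) (\<lambda>p. indicator {0..T} (fst p) * (E * indicator {x1<..<x1 + L * E} (snd p)) :: real)"
        by (rule prod_int[OF intT int_ind_const])
      show "(\<lambda>p. indicator {0..T} (fst p) * exp (-(w * fst p)) * indicator {x1<..<X (fst p)} (snd p) :: real)
          \<in> borel_measurable (lborel \<Otimes>\<^sub>M lborel)"
        unfolding X_def by (intro borel_measurable_times meas_test) measurable
      show "AE p in lborel \<Otimes>\<^sub>M lborel. norm (indicator {0..T} (fst p) * exp (-(w * fst p)) * indicator {x1<..<X (fst p)} (snd p) :: real)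
          \<le> norm (indicator {0..T} (fst p) * (E * indicator {x1<..<x1 + L * E} (snd p)) :: real)"
      proof (rule AE_I2)
        fix p :: "real \<times> real"
        obtain t x where p: "p = (t, x)" by fastforce
        show "norm (indicator {0..T} (fst p) * exp (-(w * fst p)) * indicator {x1<..<X (fst p)} (snd p) :: real)
          \<le> norm (indicator {0..T} (fst p) * (E * indicator {x1<..<x1 + L * E} (snd p)) :: real)"
        proof (cases "t \<in> {0..T}")
          case False then show ?thesis by (simp add: p)
        next
          case True
          then have wt: "\<bar>w * t\<bar> \<le> \<bar>w\<bar> * T" by (simp add: abs_mult mult_left_mono)
          have e1: "exp (-(w * t)) \<le> E" unfolding E_def using wt by simp
          have e2: "exp (w * t) \<le> E" unfolding E_def using wt by simp
          have "X t \<le> x1 + L * E" unfolding X_def using e2 L by simp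
          then have "indicator {x1<..<X t} x \<le> (indicator {x1<..<x1 + L * E} x :: real)"
            by (auto simp: indicator_def)
          moreover have "E \<ge> 0" unfolding E_def by simp
          ultimately have "exp (-(w * t)) * indicator {x1<..<X t} x \<le> E * (indicator {x1<..<x1 + L * E} x :: real)"
            using e1 by (intro mult_mono) auto
          then show ?thesis using True by (simp add: p)
        qed
      qed
    qed
    have "(\<lambda>p. indicator ({0..T} \<times> UNIV) p *\<^sub>R rho (fst p) (snd p)) =
       (\<lambda>p. indicator {0..T} (fst p) * (indicator {..<x1} (snd p) * rho02 (snd p)) +
         eta * (indicator {0..T} (fst p) * exp (-(w * fst p)) * indicator {x1<..<X (fst p)} (snd p)))"
      unfolding rho_def by (auto simp: fun_eq_iff indicator_def)
    moreover have "integrable (lborel \<Otimes>\<^sub>M lborel) \<dots>"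
      using p1 p2 by simp
    ultimately show ?thesis unfolding set_integrable_def by simp
  qed
  have weak: "weak_solution T v rho0 rho"
    unfolding weak_solution_def
  proof (intro conjI)
    show "\<forall>t\<in>{0..T}. integrable lborel (rho t)" using int_rho by simp
    show "(\<lambda>p. rho (fst p) (snd p)) \<in> borel_measurable (lborel \<Otimes>\<^sub>M lborel)" by (rule meas)
    show "set_integrable (lborel \<Otimes>\<^sub>M lborel) ({0..T} \<times> UNIV) (\<lambda>p. rho (fst p) (snd p))" by (rule sint)
    show "AE x in lborel. rho 0 x = rho0 x" using rho0_eq by simp
  next
    show "\<forall>phi. test_function phi \<longrightarrow>
        continuous_on {0..T} (\<lambda>t. \<integral>x. rho t x * phi x \<partial>lborel) \<and>
        (\<forall>t\<in>{0..T}. (\<integral>x. rho t x * phi x \<partial>lborel) - (\<integral>x. rho0 x * phi x \<partial>lborel)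
            = (LBINT s=0..t. (\<integral>x. v x * rho s x * deriv phi x \<partial>lborel)))"
  proof (intro allI impI)
    fix phi assume tf: "test_function phi"
    define C where "C = (\<integral>x. indicator {..<x1} x *\<^sub>R (rho02 x * phi x) \<partial>lborel)"
    define Phi where "Phi = (\<lambda>y::real. LBINT x=x1..y. phi x)"
    have phic: "continuous_on UNIV phi" by (rule tf_cont[OF tf])
    have key1: "(\<integral>x. rho t x * phi x \<partial>lborel) = C + eta * (exp (-(w * t)) * Phi (X t))" for t
    proof -
      have "(\<lambda>x. rho t x * phi x) = (\<lambda>x. indicator {..<x1} x *\<^sub>R (rho02 x * phi x) +
          indicator {x1<..<X t} x *\<^sub>R ((eta * exp (-(w * t))) * phi x))"
        using Xge[of t] by (auto simp: rho_def fun_eq_iff indicator_def)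
      then have "(\<integral>x. rho t x * phi x \<partial>lborel) = C + (\<integral>x. indicator {x1<..<X t} x *\<^sub>R ((eta * exp (-(w * t))) * phi x) \<partial>lborel)"
        unfolding C_def
        by (simp only:) (intro Bochner_Integration.integral_add int_rho02_phi[OF assms(2) tf] set_int_cont continuous_intros phic)
      also have "(\<integral>x. indicator {x1<..<X t} x *\<^sub>R ((eta * exp (-(w * t))) * phi x) \<partial>lborel)
          = (eta * exp (-(w * t))) * (\<integral>x. indicator {x1<..<X t} x *\<^sub>R phi x \<partial>lborel)"
        by (simp only: real_scaleR_def mult.left_commute[of "indicator {x1<..<X t} _"] integral_mult_right_zero)
      also have "(\<integral>x. indicator {x1<..<X t} x *\<^sub>R phi x \<partial>lborel) = Phi (X t)"
        unfolding Phi_def using Xge[of t] by (simp add: LBINT_as_set less_imp_le)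
      finally show ?thesis by simp
    qed
    have key0: "(\<integral>x. rho0 x * phi x \<partial>lborel) = C + eta * (exp (-(w * 0)) * Phi (X 0))"
      using key1[of 0] rho0_eq by simp
    have key2: "(\<integral>x. v x * rho s x * deriv phi x \<partial>lborel) =
        eta * (w * exp (-(w * s)) * (LBINT x=x1..X s. (x - x1) * deriv phi x))" for s
    proof -
      have "(\<lambda>x. v x * rho s x * deriv phi x) =
         (\<lambda>x. (eta * (w * exp (-(w * s)))) * (indicator {x1<..<X s} x *\<^sub>R ((x - x1) * deriv phi x)))"
      proof
        fix x
        show "v x * rho s x * deriv phi x = (eta * (w * exp (-(w * s)))) * (indicator {x1<..<X s} x *\<^sub>R ((x - x1) * deriv phi x))"
        proof (cases "x < x1")
          case True then show ?thesis by (simp add: v_def relu_def rho_def indicator_def)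
        next
          case False then show ?thesis by (simp add: v_def relu_def rho_def indicator_def)
        qed
      qed
      then have "(\<integral>x. v x * rho s x * deriv phi x \<partial>lborel) =
          (eta * (w * exp (-(w * s)))) * (\<integral>x. indicator {x1<..<X s} x *\<^sub>R ((x - x1) * deriv phi x) \<partial>lborel)"
        by simp
      also have "(\<integral>x. indicator {x1<..<X s} x *\<^sub>R ((x - x1) * deriv phi x) \<partial>lborel) = (LBINT x=x1..X s. (x - x1) * deriv phi x)"
        using Xge[of s] by (simp add: LBINT_as_set less_imp_le)
      finally show ?thesis by simp
    qed
    have PhiD: "(Phi has_real_derivative phi y) (at y)" for y
      unfolding Phi_def by (rule Phi_deriv[OF phic])
    have Phic: "continuous_on UNIV Phi"
      using PhiD by (meson DERIV_isCont continuous_at_imp_continuous_on)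
    have cX: "continuous_on UNIV X" unfolding X_def by (intro continuous_intros)
    have "continuous_on UNIV (\<lambda>s. Phi (X s))" by (rule continuous_on_compose2[OF Phic cX]) auto
    then have "continuous_on UNIV (\<lambda>t. C + eta * (exp (-(w * t)) * Phi (X t)))"
      by (intro continuous_intros)
    then have cont: "continuous_on {0..T} (\<lambda>t. LINT x|lborel. rho t x * phi x)"
      unfolding key1 by (rule continuous_on_subset) auto
    have ident: "(\<integral>x. rho t x * phi x \<partial>lborel) - (\<integral>x. rho0 x * phi x \<partial>lborel)
            = (LBINT s=0..t. (\<integral>x. v x * rho s x * deriv phi x \<partial>lborel))" for t
    proof -
      have r: "(LBINT s=0..t. (\<integral>x. v x * rho s x * deriv phi x \<partial>lborel)) =
          eta * (LBINT s=0..t. w * exp (-(w * s)) * (LBINT x=x1..X s. (x - x1) * deriv phi x))"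
        by (simp only: key2 interval_lebesgue_integral_mult_right)
      have tF: "exp (-(w * t)) * Phi (X t) - exp (-(w * 0)) * Phi (X 0) =
          (LBINT s=0..t. w * exp (-(w * s)) * (LBINT x=x1..X s. (x - x1) * deriv phi x))"
        using time_FTC[OF tf L, of w t x1] unfolding X_def Phi_def by simp
      show ?thesis unfolding r key1 key0 tF[symmetric] by (simp add: algebra_simps)
    qed
    show "continuous_on {0..T} (\<lambda>t. \<integral>x. rho t x * phi x \<partial>lborel) \<and>
        (\<forall>t\<in>{0..T}. (\<integral>x. rho t x * phi x \<partial>lborel) - (\<integral>x. rho0 x * phi x \<partial>lborel)
            = (LBINT s=0..t. (\<integral>x. v x * rho s x * deriv phi x \<partial>lborel)))"
      using cont ident by blast
  qed
  qed
  show ?thesis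
    apply (rule exI[of _ w], rule exI[of _ 1], rule exI[of _ "- x1"], rule exI[of _ rho])
    using weak rhoT unfolding v_def rho0_def by simp
qed

end
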